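(* Let $D\subset\mathbb{C}$ be an open disk centered at the origin, let $f_1,\dots,f_p:D\to\mathbb{C}$ be analytic, let $A_1,\dots,A_p\in\mathbb{C}^{n\times n}$, and let $M(\lambda)=\sum_{m=1}^p f_m(\lambda)A_m$. Assume $M$ is symmetric, i.e. $M(\lambda)^T=M(\lambda)$ for all $\lambda\in D$ (transpose, not conjugate transpose). Put $M_j:=M^{(j)}(0)$ for $j\ge 0$. The relations $$c_{i,1}=\frac{1}{i+1}\quad (i\ge 1),\qquad c_{i-1,j}=\frac{j}{i}\,c_{i,j-1}\quad (i,j>1)$$ uniquely determine an infinite scalar matrix $\mathbf{C}=[c_{i,j}]_{i,j=1}^\infty$. Define the infinite block matrix $\mathbf{S}=[S_{i,j}]_{i,j=1}^\infty$ with $n\times n$ blocks by $S_{1,1}=I$, $S_{1,j}=S_{j,1}=0$ for $j\ge 2$, and $S_{i,j}=c_{i-1,j-1}M_{i+j-2}$ for $i,j\ge 2$. Let $\mathbf{A}=\operatorname{diag}(-M_0,I,I,I,\dots)$ (block diagonal), and let $\mathbf{B}$ be the infinite block matrix whose first block row is $\big(M_1,\tfrac12 M_2,\tfrac13 M_3,\tfrac14 M_4,\dots\big)$, whose blocks in positions $(j+1,j)$ are $\tfrac1j I$ for $j\ge1$, and whose other blocks are zero. Then $\mathbf{S}$ is a symmetrizer for the infinite linear eigenvalue problem $\mathbf{A}\mathbf{x}=\lambda\mathbf{B}\mathbf{x}$: the infinite matrices $\mathbf{S}\mathbf{A}$ and $\mathbf{S}\mathbf{B}$ (each block of which is a finite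 sum) are symmetric, so that $\mathbf{S}\mathbf{A}\mathbf{x}=\lambda\mathbf{S}\mathbf{B}\mathbf{x}$ is a symmetric eigenvalue problem.
   Context: The infinite eigenvalue problem $\mathbf{A}\mathbf{x}=\lambda\mathbf{B}\mathbf{x}$ is a linearization of $M(\lambda)x=0$: if $M(\lambda)x=0$ then $\mathbf{x}=\big(\tfrac{\lambda^0}{0!}x,\tfrac{\lambda^1}{1!}x,\tfrac{\lambda^2}{2!}x,\dots\big)$ satisfies it. Symmetric for an infinite block matrix means its $(i,j)$ block equals the transpose of its $(j,i)$ block. *)

theory Defs
  imports "HOL-Analysis.Analysis"
begin

definition Mfun :: "nat \<Rightarrow> (nat \<Rightarrow> complex \<Rightarrow> complex) \<Rightarrow> (nat \<Rightarrow> complex^'n^'n) \<Rightarrow> complex \<Rightarrow> complex^'n^'n"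
  where "Mfun p f A z = (\<chi> a b. \<Sum>m=1..p. f m z * A m $ a $ b)"

definition Mder :: "(complex \<Rightarrow> complex^'n^'n) \<Rightarrow> nat \<Rightarrow> complex^'n^'n"
  where "Mder M j = (\<chi> a b. (deriv ^^ j) (\<lambda>z. M z $ a $ b) 0)"

definition cscale :: "complex \<Rightarrow> complex^'n^'n \<Rightarrow> complex^'n^'n"
  where "cscale c X = (\<chi> a b. c * X $ a $ b)"

definition C_rel :: "(nat \<Rightarrow> nat \<Rightarrow> complex) \<Rightarrow> bool"
  where "C_rel c \<longleftrightarrow> (\<forall>i\<ge>1. c i 1 = 1 / of_nat (i + 1)) \<and>
      (\<forall>i>1. \<forall>j>1. c (i - 1) j = of_nat j / of_nat i * c i (j - 1))"

definition Cmat :: "nat \<Rightarrow> nat \<Rightarrow> complex"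
  where "Cmat = (SOME c. C_rel c)"

text \<open>Infinite block matrices are functions nat => nat => block, blocks indexed from 1;
  index 0 is unused.\<close>

definition Smat :: "(complex \<Rightarrow> complex^'n^'n) \<Rightarrow> nat \<Rightarrow> nat \<Rightarrow> complex^'n^'n"
  where "Smat M i j = (if i = 1 \<and> j = 1 then mat 1
      else if i = 1 \<or> j = 1 then 0
      else cscale (Cmat (i - 1) (j - 1)) (Mder M (i + j - 2)))"

definition Amat :: "(complex \<Rightarrow> complex^'n^'n) \<Rightarrow> nat \<Rightarrow> nat \<Rightarrow> complex^'n^'n"
  where "Amat M i j = (if i \<noteq> j then 0 else if i = 1 then - Mder M 0 else mat 1)"

definition Bmat :: "(complex \<Rightarrow> complex^'n^'n) \<Rightarrow> nat \<Rightarrow> nat \<Rightarrow> complex^'n^'n"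
  where "Bmat M i j = (if i = 1 then cscale (1 / of_nat j) (Mder M j)
      else if i = j + 1 then cscale (1 / of_nat j) (mat 1) else 0)"

definition bmult :: "(nat \<Rightarrow> nat \<Rightarrow> complex^'n^'n) \<Rightarrow> (nat \<Rightarrow> nat \<Rightarrow> complex^'n^'n) \<Rightarrow> nat \<Rightarrow> nat \<Rightarrow> complex^'n^'n"
  where "bmult X Y i j = infsum (\<lambda>k. X i k ** Y k j) {1..}"

definition bsymmetric :: "(nat \<Rightarrow> nat \<Rightarrow> complex^'n^'n) \<Rightarrow> bool"
  where "bsymmetric X \<longleftrightarrow> (\<forall>i\<ge>1. \<forall>j\<ge>1. X i j = transpose (X j i))"

end

theory Submission
  imports Defs
begin

definition cc :: "nat \<Rightarrow> nat \<Rightarrow> complex"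
  where "cc a b = of_nat (fact a * fact b) / of_nat (fact (a + b))"

lemma aux: fixes F fa fb x y :: complex assumes "F \<noteq> 0" "x \<noteq> 0"
  shows "fa * (y * fb) / F = y / x * (x * fa * fb / F)"
  using assms by (simp add: field_simps)

lemma cc_rel: "C_rel cc"
  unfolding C_rel_def cc_def
proof (intro conjI allI impI)
  fix i :: nat assume "i \<ge> 1"
  show "of_nat (fact i * fact 1) / of_nat (fact (i + 1)) = 1 / (of_nat (i + 1) :: complex)"
  proof -
    have "of_nat (fact (i + 1)) = (of_nat (fact i) :: complex) * of_nat (i + 1)"
      by (simp add: algebra_simps)
    then show ?thesis by simp
  qed
next
  fix i j :: nat assume "1 < i" "1 < j"
  then obtain a b where i: "i = Suc a" and j: "j = Suc b" by (metis less_imp_Suc_add add_Suc)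
  have e: "i - 1 + j = Suc (a + b)" "i + (j - 1) = Suc (a + b)" "i - 1 = a" "j - 1 = b" using i j by auto
  show "of_nat (fact (i - 1) * fact j) / of_nat (fact (i - 1 + j)) =
        of_nat j / of_nat i * (of_nat (fact i * fact (j - 1)) / (of_nat (fact (i + (j - 1))) :: complex))"
    unfolding e unfolding i j
    apply (simp only: fact_Suc[of b] fact_Suc[of a] of_nat_mult of_nat_id id_def add_Suc_right add_Suc)
    apply (rule aux) apply (metis of_nat_eq_0_iff fact_nonzero) by (metis of_nat_eq_0_iff nat.distinct(1))
qed

lemma Cmat_rel: "C_rel Cmat"
  unfolding Cmat_def by (rule someI[where P=C_rel, OF cc_rel])

lemma C_unique: "C_rel c \<Longrightarrow> a \<ge> 1 \<Longrightarrow> b \<ge> 1 \<Longrightarrow> c a b = cc a b"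
proof (induction b arbitrary: a)
  case 0 then show ?case by simp
next
  case (Suc b)
  show ?case
  proof (cases "b = 0")
    case True
    then show ?thesis using Suc.prems cc_rel unfolding C_rel_def by simp
  next
    case False
    have r1: "c a (Suc b) = of_nat (Suc b) / of_nat (Suc a) * c (Suc a) b"
      using Suc.prems False unfolding C_rel_def
      by (metis One_nat_def Suc_less_eq diff_Suc_1 le_simps(3) neq0_conv)
    have r2: "cc a (Suc b) = of_nat (Suc b) / of_nat (Suc a) * cc (Suc a) b"
      using Suc.prems False cc_rel unfolding C_rel_def
      by (metis One_nat_def Suc_less_eq diff_Suc_1 le_simps(3) neq0_conv)
    show ?thesis using r1 r2 Suc.IH[of "Suc a"] Suc.prems(1) False by simp
  qed
qed

lemma Cmat_cc: "a \<ge> 1 \<Longrightarrow> b \<ge> 1 \<Longrightarrow> Cmat a b = cc a b"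
  using C_unique[OF Cmat_rel] .

lemma cc_sym: "cc a b = cc b a"
  unfolding cc_def by (simp add: add.commute mult.commute)

lemma cc_sym2_aux: "cc a (Suc b) / of_nat (Suc b) = of_nat (fact a * fact b) / of_nat (fact (Suc (a + b)))"
proof -
  have "cc a (Suc b) = of_nat (Suc b) * (of_nat (fact a * fact b) / of_nat (fact (Suc (a + b))))"
    unfolding cc_def by (simp only: fact_Suc[of b] of_nat_mult add_Suc_right of_nat_id id_def mult_ac times_divide_eq_right)
  then show ?thesis by (metis nonzero_mult_div_cancel_left of_nat_eq_0_iff nat.distinct(1))
qed

lemma cc_sym2: "cc a (Suc b) / of_nat (Suc b) = cc b (Suc a) / of_nat (Suc a)"
  unfolding cc_sym2_aux by (simp add: add.commute mult.commute)

lemma deriv_iter_cong: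
  assumes "open S" "\<And>z. z \<in> S \<Longrightarrow> g z = h z"
  shows "z \<in> S \<Longrightarrow> (deriv ^^ j) g z = (deriv ^^ j) h z"
proof (induction j arbitrary: z)
  case 0 then show ?case using assms by simp
next
  case (Suc j)
  have "eventually (\<lambda>x. (deriv ^^ j) g x = (deriv ^^ j) h x) (nhds z)"
    unfolding eventually_nhds using Suc.IH Suc.prems assms(1) by blast
  then have "deriv ((deriv ^^ j) g) z = deriv ((deriv ^^ j) h) z" by (rule deriv_cong_ev) simp
  then show ?case by simp
qed

lemma infsum_fin:
  fixes f :: "'a \<Rightarrow> 'b::{comm_monoid_add, t2_space}"
  assumes "finite F" "F \<subseteq> S" "\<And>x. x \<in> S - F \<Longrightarrow> f x = 0"
  shows "infsum f S = sum f F"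
proof -
  have "infsum f S = infsum f F"
    by (rule infsum_cong_neutral) (use assms in auto)
  then show ?thesis using assms by simp
qed


lemma mul_cscale_id: "X ** cscale d (mat 1) = cscale d (X :: complex^'n^'n)"
proof -
  have "(X ** cscale d (mat 1)) $ a $ b = cscale d X $ a $ b" for a b
  proof -
    have "(X ** cscale d (mat 1)) $ a $ b = (\<Sum>k\<in>UNIV. X $ a $ k * (d * (if k = b then 1 else 0)))"
      unfolding cscale_def matrix_matrix_mult_def mat_def by simp
    also have "\<dots> = (\<Sum>k\<in>UNIV. if k = b then X $ a $ k * d else 0)"
      by (rule sum.cong) auto
    also have "\<dots> = X $ a $ b * d" by simp
    finally show ?thesis unfolding cscale_def by (simp add: mult.commute)
  qed
  then show ?thesis by (simp add: vec_eq_iff)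
qed

lemma transpose_neg': "transpose (- X) = - transpose (X :: complex^'n^'n)"
  by (simp add: vec_eq_iff transpose_def)

lemma transpose_zero': "transpose (0 :: complex^'n^'n) = 0"
  by (simp add: vec_eq_iff transpose_def)

lemma transpose_cscale: "transpose (cscale c X) = cscale c (transpose X)"
  unfolding cscale_def by (simp add: vec_eq_iff transpose_def)

theorem theorem2:
  fixes r :: real and p :: nat
    and f :: "nat \<Rightarrow> complex \<Rightarrow> complex"
    and A :: "nat \<Rightarrow> complex^'n^'n"
  assumes "r > 0"
    and "\<And>m. m \<in> {1..p} \<Longrightarrow> f m holomorphic_on ball 0 r"
    and "\<And>z. z \<in> ball 0 r \<Longrightarrow> transpose (Mfun p f A z) = Mfun p f A z"
  shows "C_rel Cmat
    \<and> (\<forall>c. C_rel c \<longrightarrow> (\<forall>i\<ge>1. \<forall>j\<ge>1. c i j = Cmat i j))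
    \<and> (\<forall>i\<ge>1. \<forall>j\<ge>1. finite {k. k \<ge> 1 \<and> Smat (Mfun p f A) i k ** Amat (Mfun p f A) k j \<noteq> 0})
    \<and> (\<forall>i\<ge>1. \<forall>j\<ge>1. finite {k. k \<ge> 1 \<and> Smat (Mfun p f A) i k ** Bmat (Mfun p f A) k j \<noteq> 0})
    \<and> bsymmetric (bmult (Smat (Mfun p f A)) (Amat (Mfun p f A)))
    \<and> bsymmetric (bmult (Smat (Mfun p f A)) (Bmat (Mfun p f A)))"
proof -
  define M where "M = Mfun p f A"
  define N where "N = Mder M"
  have Nsym: "transpose (N j) = N j" for j
  proof -
    have "(deriv ^^ j) (\<lambda>z. M z $ a $ b) 0 = (deriv ^^ j) (\<lambda>z. M z $ b $ a) 0" for a b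
    proof (rule deriv_iter_cong[of "ball 0 r"])
      fix z :: complex assume "z \<in> ball 0 r"
      from assms(3)[OF this] show "M z $ a $ b = M z $ b $ a"
        unfolding M_def by (metis transpose_def vec_lambda_beta)
    qed (use assms(1) in auto)
    then show ?thesis unfolding N_def Mder_def transpose_def by (simp add: vec_eq_iff)
  qed
  have C1: "C_rel Cmat" by (rule Cmat_rel)
  have C2: "\<forall>c. C_rel c \<longrightarrow> (\<forall>i\<ge>1. \<forall>j\<ge>1. c i j = Cmat i j)"
    using C_unique Cmat_cc by auto
  have SAz: "k \<ge> 1 \<Longrightarrow> k \<noteq> j \<Longrightarrow> Smat M i k ** Amat M k j = 0" for i k j
    unfolding Amat_def by simp
  have SBz: "k \<ge> 1 \<Longrightarrow> k \<noteq> 1 \<Longrightarrow> k \<noteq> j + 1 \<Longrightarrow> Smat M i k ** Bmat M k j = 0" for i k j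
    unfolding Bmat_def by simp
  have SB1: "i \<ge> 2 \<Longrightarrow> Smat M i 1 ** Bmat M 1 j = 0" for i j
    unfolding Smat_def by simp
  have F1: "finite {k. k \<ge> 1 \<and> Smat M i k ** Amat M k j \<noteq> 0}" for i j
    by (rule finite_subset[of _ "{j}"]) (use SAz in auto)
  have F2: "finite {k. k \<ge> 1 \<and> Smat M i k ** Bmat M k j \<noteq> 0}" for i j
    by (rule finite_subset[of _ "{1, j+1}"]) (use SBz in auto)
  have SA: "j \<ge> 1 \<Longrightarrow> bmult (Smat M) (Amat M) i j = Smat M i j ** Amat M j j" for i j
    unfolding bmult_def by (subst infsum_fin[of "{j}"]) (use SAz in auto)
  define SBx where "SBx i j = (if i = 1 then cscale (1 / of_nat j) (N j)
        else cscale (Cmat (i - 1) j / of_nat j) (N (i + j - 1)))" for i j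
  have SB: "i \<ge> 1 \<Longrightarrow> j \<ge> 1 \<Longrightarrow> bmult (Smat M) (Bmat M) i j = SBx i j" for i j
  proof -
    assume ij: "i \<ge> 1" "j \<ge> 1"
    show ?thesis
    proof (cases "i = 1")
      case True
      have "bmult (Smat M) (Bmat M) i j = Smat M i 1 ** Bmat M 1 j + Smat M i (j+1) ** Bmat M (j+1) j"
        unfolding bmult_def using ij by (subst infsum_fin[of "{1, j+1}"]) (use SBz in auto)
      also have "\<dots> = SBx i j"
        using True ij unfolding Smat_def Bmat_def SBx_def N_def by simp
      finally show ?thesis .
    next
      case False
      have "bmult (Smat M) (Bmat M) i j = Smat M i 1 ** Bmat M 1 j + Smat M i (j+1) ** Bmat M (j+1) j"
        unfolding bmult_def using ij by (subst infsum_fin[of "{1, j+1}"]) (use SBz in auto)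
      also have "\<dots> = Smat M i (j+1) ** cscale (1 / of_nat j) (mat 1)"
        using False ij SB1[of i j] unfolding Bmat_def by simp
      also have "\<dots> = SBx i j"
        unfolding mul_cscale_id using False ij unfolding Smat_def SBx_def N_def cscale_def
        by (simp add: vec_eq_iff)
      finally show ?thesis .
    qed
  qed
  have sym1: "bsymmetric (bmult (Smat M) (Amat M))"
    unfolding bsymmetric_def
  proof (intro allI impI)
    fix i j :: nat assume ij: "i \<ge> 1" "j \<ge> 1"
    show "bmult (Smat M) (Amat M) i j = transpose (bmult (Smat M) (Amat M) j i)"
      unfolding SA[OF ij(2)] SA[OF ij(1)]
      using ij Nsym[of 0] Nsym[of "i+j-2"] Cmat_cc[of "i-1" "j-1"] Cmat_cc[of "j-1" "i-1"] cc_sym[of "i-1" "j-1"]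
      unfolding Smat_def Amat_def N_def
      by (auto simp: transpose_cscale transpose_mat add.commute transpose_neg' transpose_zero')
  qed
  have sym2: "bsymmetric (bmult (Smat M) (Bmat M))"
    unfolding bsymmetric_def
  proof (intro allI impI)
    fix i j :: nat assume ij: "i \<ge> 1" "j \<ge> 1"
    have key: "Cmat (i - 1) j / of_nat j = Cmat (j - 1) i / of_nat i" if "i \<noteq> 1" "j \<noteq> 1"
    proof -
      obtain a b where i: "i = Suc a" and j: "j = Suc b" using ij by (metis Suc_le_D One_nat_def)
      show ?thesis using that cc_sym2[of a b] Cmat_cc[of a j] Cmat_cc[of b i] unfolding i j by simp
    qed
    have k1: "Cmat (k - 1) 1 = 1 / of_nat k" if "k \<ge> 2" for k
      using C1 that unfolding C_rel_def by auto
    show "bmult (Smat M) (Bmat M) i j = transpose (bmult (Smat M) (Bmat M) j i)"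
      unfolding SB[OF ij] SB[OF ij(2,1)] SBx_def
      using ij key Nsym[of j] Nsym[of i] Nsym[of "i+j-1"] k1[of i] k1[of j]
      by (auto simp: transpose_cscale add.commute)
  qed
  show ?thesis using C1 C2 F1 F2 sym1 sym2 unfolding M_def by blast
qed

end
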